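(* Let $G$ be a proper, Polishable, strongly dense subgroup of $\mathbb{T}^\mathbb{N}$. Then the action of $G$ on $\mathbb{T}^\mathbb{N}$ by (coordinatewise multiplicative) translation, with $G$ carrying its Polish group topology, is turbulent.
   Context: $\mathbb{T}=\{z\in\mathbb{C}:|z|=1\}$, and $\mathbb{T}^\mathbb{N}$ carries the product topology and coordinatewise multiplication. A subgroup $G\le\mathbb{T}^\mathbb{N}$ is Polishable if it is a Borel subset and admits a Polish group topology whose Borel sets are exactly the Borel subsets of $\mathbb{T}^\mathbb{N}$ contained in $G$. $G$ is strongly dense if for every finite sequence $(z_0,\dots,z_n)$ of elements of $\mathbb{T}$ there is $g\in G$ with $g_i=z_i$ for all $i\le n$. For a continuous action of a Polish group $G$ on a Polish space $X$, $U\subseteq X$ open, $V\subseteq G$ a symmetric open neighborhood of the identity, and $x\in U$, the local orbit $\mathcal{O}(x,U,V)$ is the set of $y\in U$ for which there are $g_0,\dots,g_k\in V$ and $x=x_0,\dots,x_{k+1}=y$ all in $U$ with $x_{i+1}=g_i\cdot x_i$ for $i\le k$. The action is turbulent if every orbit is dense, every orbit is meager, and every local orbit $\mathcal{O}(x,U,V)$ has closure with nonempty interior. *)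

theory Defs
  imports "HOL-Analysis.Analysis"
begin

definition polish_space :: "'a topology \<Rightarrow> bool" where
  "polish_space X \<longleftrightarrow> completely_metrizable_space X \<and> separable_space X"

definition borel_sets_of :: "'a topology \<Rightarrow> 'a set set" where
  "borel_sets_of X = sigma_sets (topspace X) {U. openin X U}"

definition nowhere_dense_in :: "'a topology \<Rightarrow> 'a set \<Rightarrow> bool" where
  "nowhere_dense_in X S \<longleftrightarrow> S \<subseteq> topspace X \<and> X interior_of (X closure_of S) = {}"

definition meager_in :: "'a topology \<Rightarrow> 'a set \<Rightarrow> bool" where
  "meager_in X S \<longleftrightarrow> S \<subseteq> topspace X \<and>
     (\<exists>F :: nat \<Rightarrow> 'a set. (\<forall>n. nowhere_dense_in X (F n)) \<and> S \<subseteq> (\<Union>n. F n))"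

text \<open>Action of a topological group (topology \<open>Gt\<close> with underlying set \<open>topspace Gt\<close>,
  identity \<open>e\<close>, inverse \<open>inv\<close>) on a space \<open>X\<close> via \<open>act\<close>.\<close>

definition orbit :: "'g topology \<Rightarrow> ('g \<Rightarrow> 'x \<Rightarrow> 'x) \<Rightarrow> 'x \<Rightarrow> 'x set" where
  "orbit Gt act x = {act g x | g. g \<in> topspace Gt}"

definition local_orbit ::
  "('g \<Rightarrow> 'x \<Rightarrow> 'x) \<Rightarrow> 'x \<Rightarrow> 'x set \<Rightarrow> 'g set \<Rightarrow> 'x set" where
  "local_orbit act x U V = {y \<in> U. \<exists>(k::nat) (g :: nat \<Rightarrow> 'g) (xs :: nat \<Rightarrow> 'x).
      (\<forall>i\<le>k. g i \<in> V) \<and> (\<forall>i\<le>Suc k. xs i \<in> U) \<and> xs 0 = x \<and> xs (Suc k) = y \<and>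
      (\<forall>i\<le>k. xs (Suc i) = act (g i) (xs i))}"

definition turbulent ::
  "'g topology \<Rightarrow> 'g \<Rightarrow> ('g \<Rightarrow> 'g) \<Rightarrow> 'x topology \<Rightarrow> ('g \<Rightarrow> 'x \<Rightarrow> 'x) \<Rightarrow> bool" where
  "turbulent Gt e ginv X act \<longleftrightarrow>
     (\<forall>x\<in>topspace X. X closure_of (orbit Gt act x) = topspace X) \<and>
     (\<forall>x\<in>topspace X. meager_in X (orbit Gt act x)) \<and>
     (\<forall>U V x. openin X U \<and> openin Gt V \<and> e \<in> V \<and> (\<forall>g\<in>V. ginv g \<in> V) \<and> x \<in> U \<longrightarrow>
        X interior_of (X closure_of (local_orbit act x U V)) \<noteq> {})"

definition Tor :: "complex set" where
  "Tor = {z. cmod z = 1}"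

text \<open>\<open>\<T>^\<nat>\<close> as a subset of \<open>nat \<Rightarrow> complex\<close>, which carries the product topology.\<close>
definition TN :: "(nat \<Rightarrow> complex) set" where
  "TN = {x. \<forall>n. x n \<in> Tor}"

definition TN_top :: "(nat \<Rightarrow> complex) topology" where
  "TN_top = top_of_set TN"

definition tmult :: "(nat \<Rightarrow> complex) \<Rightarrow> (nat \<Rightarrow> complex) \<Rightarrow> (nat \<Rightarrow> complex)" where
  "tmult g x = (\<lambda>n. g n * x n)"

definition tinv :: "(nat \<Rightarrow> complex) \<Rightarrow> (nat \<Rightarrow> complex)" where
  "tinv g = (\<lambda>n. inverse (g n))"

definition tone :: "nat \<Rightarrow> complex" where
  "tone = (\<lambda>n. 1)"

definition subgroup_TN :: "(nat \<Rightarrow> complex) set \<Rightarrow> bool" where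
  "subgroup_TN G \<longleftrightarrow> G \<subseteq> TN \<and> tone \<in> G \<and>
     (\<forall>g\<in>G. \<forall>h\<in>G. tmult g h \<in> G) \<and> (\<forall>g\<in>G. tinv g \<in> G)"

definition polish_group_topology_for :: "(nat \<Rightarrow> complex) set \<Rightarrow> (nat \<Rightarrow> complex) topology \<Rightarrow> bool" where
  "polish_group_topology_for G \<tau> \<longleftrightarrow>
     topspace \<tau> = G \<and> polish_space \<tau> \<and>
     continuous_map (prod_topology \<tau> \<tau>) \<tau> (\<lambda>(g, h). tmult g h) \<and>
     continuous_map \<tau> \<tau> tinv \<and>
     borel_sets_of \<tau> = {B \<in> sets (borel :: (nat \<Rightarrow> complex) measure). B \<subseteq> G}"

definition polishable :: "(nat \<Rightarrow> complex) set \<Rightarrow> bool" where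
  "polishable G \<longleftrightarrow> subgroup_TN G \<and> G \<in> sets (borel :: (nat \<Rightarrow> complex) measure) \<and>
     (\<exists>\<tau>. polish_group_topology_for G \<tau>)"

definition strongly_dense :: "(nat \<Rightarrow> complex) set \<Rightarrow> bool" where
  "strongly_dense G \<longleftrightarrow>
     (\<forall>(n::nat) (z :: nat \<Rightarrow> complex). (\<forall>i\<le>n. z i \<in> Tor) \<longrightarrow> (\<exists>g\<in>G. \<forall>i\<le>n. g i = z i))"

end

theory Submission
  imports Defs "HOL-Complex_Analysis.Weierstrass_Factorization"
begin


definition bp :: "'a topology \<Rightarrow> 'a set \<Rightarrow> bool" where
  "bp X A \<longleftrightarrow> A \<subseteq> topspace X \<and> (\<exists>Q. openin X Q \<and> meager_in X ((A - Q) \<union> (Q - A)))"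

lemma nowhere_dense_mono: "nowhere_dense_in X T \<Longrightarrow> S \<subseteq> T \<Longrightarrow> nowhere_dense_in X S"
proof -
  assume a: "nowhere_dense_in X T" "S \<subseteq> T"
  have "X interior_of (X closure_of S) \<subseteq> X interior_of (X closure_of T)"
    by (intro interior_of_mono closure_of_mono a(2))
  then show ?thesis using a unfolding nowhere_dense_in_def by blast
qed

lemma meager_mono: "meager_in X T \<Longrightarrow> S \<subseteq> T \<Longrightarrow> meager_in X S"
  unfolding meager_in_def by blast

lemma nowhere_dense_empty: "nowhere_dense_in X {}"
  by (simp add: nowhere_dense_in_def)

lemma meager_empty: "meager_in X {}"
  unfolding meager_in_def using nowhere_dense_empty by (auto intro!: exI[of _ "\<lambda>n. {}"])

lemma meager_UN_nat:
  fixes A :: "nat \<Rightarrow> 'a set"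
  assumes "\<And>n. meager_in X (A n)"
  shows "meager_in X (\<Union>n. A n)"
proof -
  have "\<forall>n. \<exists>F::nat\<Rightarrow>_. (\<forall>k. nowhere_dense_in X (F k)) \<and> A n \<subseteq> (\<Union>k. F k)"
    using assms unfolding meager_in_def by blast
  then have "\<exists>F::nat\<Rightarrow>nat\<Rightarrow>_. \<forall>n. (\<forall>k. nowhere_dense_in X (F n k)) \<and> A n \<subseteq> (\<Union>k. F n k)"
    by (rule Hilbert_Choice.choice)
  then obtain F :: "nat \<Rightarrow> nat \<Rightarrow> _" where F0: "\<forall>n. (\<forall>k. nowhere_dense_in X (F n k)) \<and> A n \<subseteq> (\<Union>k. F n k)" ..
  then have F: "\<And>n k. nowhere_dense_in X (F n k)" "\<And>n. A n \<subseteq> (\<Union>k. F n k)" by auto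
  define F' where "F' j = F (fst (prod_decode j)) (snd (prod_decode j))" for j
  have "(\<Union>n. A n) \<subseteq> (\<Union>j. F' j)"
  proof
    fix x assume "x \<in> (\<Union>n. A n)"
    then obtain n k where "x \<in> F n k" using F(2) by blast
    then show "x \<in> (\<Union>j. F' j)" unfolding F'_def
      by (intro UN_I[of "prod_encode (n,k)"]) auto
  qed
  moreover have "(\<Union>n. A n) \<subseteq> topspace X"
    using assms unfolding meager_in_def by blast
  moreover have "\<forall>j. nowhere_dense_in X (F' j)" by (simp add: F'_def F(1))
  ultimately show ?thesis unfolding meager_in_def by blast
qed

lemma meager_Un: "meager_in X S \<Longrightarrow> meager_in X T \<Longrightarrow> meager_in X (S \<union> T)"
proof -
  assume a: "meager_in X S" "meager_in X T"
  have "meager_in X (\<Union>n::nat. if n = 0 then S else T)"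
    by (rule meager_UN_nat) (simp add: a)
  moreover have "(\<Union>n::nat. if n = 0 then S else T) = S \<union> T"
  proof (rule equalityI)
    show "S \<union> T \<subseteq> (\<Union>n::nat. if n = 0 then S else T)"
    proof
      fix x assume "x \<in> S \<union> T"
      then show "x \<in> (\<Union>n::nat. if n = 0 then S else T)"
      proof
        assume "x \<in> S" then show ?thesis by (intro UN_I[of 0]) auto
      next
        assume "x \<in> T" then show ?thesis by (intro UN_I[of "Suc 0"]) auto
      qed
    qed
  qed auto
  ultimately show ?thesis by simp
qed

lemma meager_countable_UN:
  assumes "countable K" "\<And>k. k \<in> K \<Longrightarrow> meager_in X (A k)"
  shows "meager_in X (\<Union>k\<in>K. A k)"
proof (cases "K = {}")
  case True then show ?thesis by (simp add: meager_empty)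
next
  case False
  have "(\<Union>k\<in>K. A k) = (\<Union>n. A (from_nat_into K n))"
    using range_from_nat_into[OF False assms(1)] by (metis image_image)
  moreover have "meager_in X (\<Union>n. A (from_nat_into K n))"
    by (rule meager_UN_nat) (simp add: False assms from_nat_into)
  ultimately show ?thesis by simp
qed

lemma baire_nonmeager:
  assumes X: "completely_metrizable_space X \<or> locally_compact_space X \<and> regular_space X"
    and "openin X S" "S \<noteq> {}"
  shows "\<not> meager_in X S"
proof
  assume "meager_in X S"
  then obtain F :: "nat \<Rightarrow> _" where F: "\<And>n. nowhere_dense_in X (F n)" "S \<subseteq> (\<Union>n. F n)"
    unfolding meager_in_def by blast
  have "X interior_of \<Union>(range (\<lambda>n. X closure_of F n)) = {}"
    using F(1) by (intro Baire_category_alt X) (auto simp: nowhere_dense_in_def)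
  moreover have "S \<subseteq> \<Union>(range (\<lambda>n. X closure_of F n))"
  proof -
    have cl: "F n \<subseteq> X closure_of F n" for n
      using F(1)[of n] closure_of_subset[of "F n" X] unfolding nowhere_dense_in_def by blast
    show ?thesis
    proof
      fix x assume "x \<in> S"
      then obtain n where "x \<in> F n" using F(2) by blast
      then show "x \<in> \<Union>(range (\<lambda>n. X closure_of F n))" using cl[of n] by blast
    qed
  qed
  ultimately have "S \<subseteq> {}"
    by (metis assms(2) interior_of_maximal)
  then show False using assms by blast
qed

lemma homeo_nowhere:
  assumes "homeomorphic_map X X f" "nowhere_dense_in X S"
  shows "nowhere_dense_in X (f ` S)"
proof -
  have S: "S \<subseteq> topspace X" using assms unfolding nowhere_dense_in_def by blast
  have sur: "f ` topspace X = topspace X"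
    using assms(1) homeomorphic_imp_surjective_map by blast
  have "X closure_of (f ` S) = f ` (X closure_of S)"
    by (rule homeomorphic_map_closure_of[OF assms(1) S])
  moreover have "X interior_of (f ` (X closure_of S)) = f ` (X interior_of (X closure_of S))"
    by (rule homeomorphic_map_interior_of[OF assms(1) closure_of_subset_topspace])
  moreover have "f ` S \<subseteq> topspace X" using S sur by blast
  ultimately show ?thesis using assms(2) unfolding nowhere_dense_in_def by auto
qed

lemma homeo_meager:
  assumes "homeomorphic_map X X f" "meager_in X S"
  shows "meager_in X (f ` S)"
proof -
  obtain F :: "nat \<Rightarrow> _" where F: "\<And>n. nowhere_dense_in X (F n)" "S \<subseteq> (\<Union>n. F n)" "S \<subseteq> topspace X"
    using assms(2) unfolding meager_in_def by blast
  have sur: "f ` topspace X = topspace X"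
    using assms(1) homeomorphic_imp_surjective_map by blast
  show ?thesis unfolding meager_in_def
  proof (intro conjI exI[of _ "\<lambda>n. f ` F n"] allI)
    show "f ` S \<subseteq> topspace X" using F(3) sur by blast
    show "nowhere_dense_in X (f ` F n)" for n using F(1) homeo_nowhere[OF assms(1)] by blast
    show "f ` S \<subseteq> (\<Union>n. f ` F n)" using F(2) by blast
  qed
qed

lemma closure_minus_nowhere:
  assumes "openin X Q"
  shows "nowhere_dense_in X (X closure_of Q - Q)"
proof -
  let ?T = "X closure_of Q - Q"
  have cl: "closedin X ?T"
    using assms by (simp add: closedin_diff)
  have "X interior_of ?T = {}"
  proof -
    have "openin X (X interior_of ?T)" by simp
    moreover have "X interior_of ?T \<inter> Q = {}"
      using interior_of_subset[of X ?T] by blast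
    ultimately have "X interior_of ?T \<inter> X closure_of Q = {}"
      using openin_Int_closure_of_eq_empty by blast
    then show ?thesis using interior_of_subset[of X ?T] by blast
  qed
  then show ?thesis
    using cl closure_of_closedin closedin_subset unfolding nowhere_dense_in_def by metis
qed

lemma bp_sigma:
  assumes "A \<in> sigma_sets (topspace X) {U. openin X U}"
  shows "bp X A"
  using assms
proof (induction rule: sigma_sets.induct)
  case (Basic a)
  then show ?case unfolding bp_def
    by (intro conjI exI[of _ a]) (auto simp: meager_empty openin_subset)
next
  case Empty
  then show ?case unfolding bp_def
    by (intro conjI exI[of _ "{}"]) (auto simp: meager_empty)
next
  case (Compl a)
  then obtain Q where Q: "openin X Q" "meager_in X ((a - Q) \<union> (Q - a))" "a \<subseteq> topspace X"
    unfolding bp_def by blast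
  let ?Q = "topspace X - X closure_of Q"
  have "meager_in X (((a - Q) \<union> (Q - a)) \<union> (X closure_of Q - Q))"
  proof (rule meager_Un[OF Q(2)])
    show "meager_in X (X closure_of Q - Q)"
      unfolding meager_in_def using closure_minus_nowhere[OF Q(1)]
      by (intro conjI exI[of _ "\<lambda>n. X closure_of Q - Q"]) (auto simp: nowhere_dense_in_def)
  qed
  moreover have "((topspace X - a) - ?Q) \<union> (?Q - (topspace X - a)) \<subseteq>
      ((a - Q) \<union> (Q - a)) \<union> (X closure_of Q - Q)"
    using closure_of_subset[of Q X] Q(1) openin_subset by blast
  ultimately show ?case unfolding bp_def
    by (intro conjI exI[of _ ?Q]) (auto intro: meager_mono)
next
  case (Union a)
  then have "\<forall>i. \<exists>Q. openin X Q \<and> meager_in X ((a i - Q) \<union> (Q - a i))"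
    unfolding bp_def by blast
  then have "\<exists>Q. \<forall>i. openin X (Q i) \<and> meager_in X ((a i - Q i) \<union> (Q i - a i))"
    by (metis choice_iff)
  then obtain Q where Q0: "\<forall>i. openin X (Q i) \<and> meager_in X ((a i - Q i) \<union> (Q i - a i))" ..
  then have Q: "\<And>i. openin X (Q i)" "\<And>i. meager_in X ((a i - Q i) \<union> (Q i - a i))" by auto
  have "meager_in X (\<Union>i. (a i - Q i) \<union> (Q i - a i))"
    by (rule meager_UN_nat) (rule Q(2))
  moreover have "((\<Union>i. a i) - (\<Union>i. Q i)) \<union> ((\<Union>i. Q i) - (\<Union>i. a i)) \<subseteq> (\<Union>i. (a i - Q i) \<union> (Q i - a i))"
    by blast
  ultimately show ?case unfolding bp_def using Union.IH Q(1)
    by (intro conjI exI[of _ "\<Union>i. Q i"]) (auto intro: meager_mono simp: bp_def)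
qed




lemma TN_unit: "x \<in> TN \<Longrightarrow> cmod (x i) = 1"
  by (simp add: TN_def Tor_def)

lemma TN_nz: "x \<in> TN \<Longrightarrow> x i \<noteq> 0"
  using TN_unit[of x i] by auto

lemma TN_I: "(\<And>i. cmod (x i) = 1) \<Longrightarrow> x \<in> TN"
  by (simp add: TN_def Tor_def)

lemma tmult_TN: "g \<in> TN \<Longrightarrow> h \<in> TN \<Longrightarrow> tmult g h \<in> TN"
  by (intro TN_I) (simp add: tmult_def norm_mult TN_unit)

lemma tinv_TN: "g \<in> TN \<Longrightarrow> tinv g \<in> TN"
  by (intro TN_I) (simp add: tinv_def norm_inverse TN_unit)

lemma tone_TN: "tone \<in> TN"
  by (intro TN_I) (simp add: tone_def)

lemma tmult_assoc: "tmult (tmult a b) c = tmult a (tmult b c)"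
  by (simp add: tmult_def mult.assoc)

lemma tmult_commute: "tmult a b = tmult b a"
  by (simp add: tmult_def mult.commute)

lemma tmult_tone [simp]: "tmult tone g = g" "tmult g tone = g"
  by (simp_all add: tmult_def tone_def)

lemma tmult_tinv: "g \<in> TN \<Longrightarrow> tmult (tinv g) g = tone"
  by (rule ext) (simp add: tmult_def tinv_def tone_def TN_nz)

lemma tmult_tinv2: "g \<in> TN \<Longrightarrow> tmult g (tinv g) = tone"
  by (rule ext) (simp add: tmult_def tinv_def tone_def TN_nz)

lemma tinv_tone [simp]: "tinv tone = tone"
  by (simp add: tinv_def tone_def)

lemma tinv_tinv [simp]: "tinv (tinv g) = g"
  by (simp add: tinv_def)

lemma tinv_tmult: "tinv (tmult g h) = tmult (tinv g) (tinv h)"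
  by (rule ext) (simp add: tmult_def tinv_def)

lemma tmult_cancel: "g \<in> TN \<Longrightarrow> tmult (tinv g) (tmult g h) = h"
  by (simp add: tmult_assoc[symmetric] tmult_tinv)

lemma tmult_cancel2: "g \<in> TN \<Longrightarrow> tmult g (tmult (tinv g) h) = h"
  by (simp add: tmult_assoc[symmetric] tmult_tinv2)

lemma topspace_TN [simp]: "topspace TN_top = TN"
  by (simp add: TN_top_def)

lemma open_ocyl: "open {y::nat\<Rightarrow>complex. \<forall>i\<le>n. cmod (y i - c i) < r}"
proof -
  have "open {y::nat\<Rightarrow>complex. \<forall>i\<in>{..n}. y (id i) \<in> ball (c i) r}"
    by (rule product_topology_basis'[where I="{..n}" and x=id and U="\<lambda>i. ball (c i) r"]) auto
  moreover have "{y::nat\<Rightarrow>complex. \<forall>i\<in>{..n}. y (id i) \<in> ball (c i) r} = {y. \<forall>i\<le>n. cmod (y i - c i) < r}"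
    by (auto simp: dist_norm norm_minus_commute)
  ultimately show ?thesis by simp
qed

lemma openin_cyl: "openin TN_top {y\<in>TN. \<forall>i\<le>n. cmod (y i - c i) < r}"
proof -
  have "{y\<in>TN. \<forall>i\<le>n. cmod (y i - c i) < r} = TN \<inter> {y. \<forall>i\<le>n. cmod (y i - c i) < r}" by auto
  moreover have "openin (top_of_set TN) (TN \<inter> {y. \<forall>i\<le>n. cmod (y i - c i) < r})"
    by (rule openin_open_Int[OF open_ocyl])
  ultimately show ?thesis unfolding TN_top_def by simp
qed

lemma CYL:
  assumes "openin TN_top U" "x \<in> U"
  shows "\<exists>n r. r > 0 \<and> (\<forall>y\<in>TN. (\<forall>i\<le>n. cmod (y i - x i) < r) \<longrightarrow> y \<in> U)"
proof -
  obtain S where S: "open S" "U = TN \<inter> S"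
    using assms(1) unfolding TN_top_def by (auto simp: openin_open)
  have "openin (product_topology (\<lambda>i. euclidean) UNIV) S"
    using S(1) by (simp add: open_fun_def)
  then obtain X where X: "x \<in> (\<Pi>\<^sub>E i\<in>UNIV. X i)" "\<forall>i. openin euclidean (X i)"
      "finite {i. X i \<noteq> topspace euclidean}" "(\<Pi>\<^sub>E i\<in>UNIV. X i) \<subseteq> S"
    using product_topology_open_contains_basis[of "\<lambda>i. euclidean" UNIV S x] assms(2) S(2) by blast
  define J where "J = {i. X i \<noteq> UNIV}"
  have J: "finite J" using X(3) by (simp add: J_def)
  have "\<forall>i\<in>J. \<exists>e>0. ball (x i) e \<subseteq> X i"
    using X(1,2) by (metis PiE_iff UNIV_I open_contains_ball open_openin)
  then obtain e where e: "\<And>i. i \<in> J \<Longrightarrow> e i > 0 \<and> ball (x i) (e i) \<subseteq> X i"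
    by metis
  define r where "r = Min (insert 1 (e ` J))"
  define n where "n = Max (insert 0 J)"
  have r: "r > 0" unfolding r_def using J e by (subst Min_gr_iff) auto
  have rle: "i \<in> J \<Longrightarrow> r \<le> e i" for i unfolding r_def using J by (intro Min_le) auto
  have nle: "i \<in> J \<Longrightarrow> i \<le> n" for i unfolding n_def using J by (intro Max_ge) auto
  have "\<forall>y\<in>TN. (\<forall>i\<le>n. cmod (y i - x i) < r) \<longrightarrow> y \<in> U"
  proof (intro ballI impI)
    fix y assume y: "y \<in> TN" "\<forall>i\<le>n. cmod (y i - x i) < r"
    have "y i \<in> X i" for i
    proof (cases "i \<in> J")
      case True
      then have "cmod (y i - x i) < e i" using y nle rle by fastforce
      then show ?thesis using e[OF True] by (auto simp: dist_norm norm_minus_commute)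
    next
      case False then show ?thesis by (simp add: J_def)
    qed
    then have "y \<in> S" using X(4) by auto
    then show "y \<in> U" using S y by auto
  qed
  then show ?thesis using r by blast
qed

lemma compact_TN: "compact TN"
proof -
  have "TN = (\<Pi>\<^sub>E i\<in>UNIV. Tor)" by (auto simp: TN_def)
  moreover have "compactin (product_topology (\<lambda>i. euclidean) UNIV) (\<Pi>\<^sub>E i\<in>(UNIV::nat set). Tor)"
    by (subst compactin_PiE) (auto simp: Tor_def compact_sphere[of 0 1, unfolded sphere_def, simplified])
  ultimately show ?thesis
    by (metis compactin_euclidean_iff euclidean_product_topology)
qed

lemma TN_baire: "completely_metrizable_space TN_top \<or> locally_compact_space TN_top \<and> regular_space TN_top"
proof -
  have c: "compact_space TN_top" unfolding TN_top_def using compact_TN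
    by (simp add: compact_space_subtopology compactin_euclidean_iff)
  have h: "Hausdorff_space TN_top" unfolding TN_top_def
    by (simp add: Hausdorff_space_subtopology)
  show ?thesis using c h
    by (simp add: compact_imp_locally_compact_space compact_Hausdorff_imp_regular_space)
qed

lemma cont_tmult_TN: "a \<in> TN \<Longrightarrow> continuous_map TN_top TN_top (tmult a)"
proof -
  assume a: "a \<in> TN"
  have c: "continuous_on TN (\<lambda>x::nat\<Rightarrow>complex. x i)" for i
    using continuous_on_subset[OF continuous_on_product_coordinates[of i]] by blast
  have "continuous_on TN (\<lambda>x. a i * x i)" for i
    by (intro continuous_on_mult continuous_on_const c)
  then have "continuous_on TN (tmult a)"
    unfolding tmult_def by (rule continuous_on_coordinatewise_then_product)
  moreover have "tmult a \<in> TN \<rightarrow> TN" using a tmult_TN by blast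
  ultimately show ?thesis unfolding TN_top_def by simp
qed

lemma homeo_tmult_TN: "a \<in> TN \<Longrightarrow> homeomorphic_map TN_top TN_top (tmult a)"
  unfolding homeomorphic_map_maps homeomorphic_maps_def
  by (intro exI[of _ "tmult (tinv a)"]) (auto simp: cont_tmult_TN tinv_TN tmult_cancel tmult_cancel2)




lemma unit_inv_mult: "cmod k = 1 \<Longrightarrow> cmod (inverse k * g - 1) = cmod (g - k)"
proof -
  assume k: "cmod k = 1"
  then have "k \<noteq> 0" by auto
  then have "inverse k * g - 1 = inverse k * (g - k)" by (simp add: field_simps)
  then show ?thesis using k by (simp add: norm_mult norm_inverse)
qed

locale setting =
  fixes G :: "(nat \<Rightarrow> complex) set" and \<tau> :: "(nat \<Rightarrow> complex) topology"
  assumes sub: "subgroup_TN G" and pg: "polish_group_topology_for G \<tau>"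
begin

lemma top_tau [simp]: "topspace \<tau> = G"
  using pg by (simp add: polish_group_topology_for_def)

lemma G_TN: "G \<subseteq> TN" and tone_G: "tone \<in> G"
  and mult_G: "g \<in> G \<Longrightarrow> h \<in> G \<Longrightarrow> tmult g h \<in> G"
  and inv_G: "g \<in> G \<Longrightarrow> tinv g \<in> G"
  using sub by (auto simp: subgroup_TN_def)

lemma baire_tau: "completely_metrizable_space \<tau> \<or> locally_compact_space \<tau> \<and> regular_space \<tau>"
  using pg by (simp add: polish_group_topology_for_def polish_space_def)

lemma cont_mult: "continuous_map (prod_topology \<tau> \<tau>) \<tau> (\<lambda>(g, h). tmult g h)"
  and cont_inv: "continuous_map \<tau> \<tau> tinv"
  using pg by (auto simp: polish_group_topology_for_def)

lemma borel_tau: "borel_sets_of \<tau> = {B \<in> sets (borel :: (nat \<Rightarrow> complex) measure). B \<subseteq> G}"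
  using pg by (simp add: polish_group_topology_for_def)

lemma cont_lmult: "a \<in> G \<Longrightarrow> continuous_map \<tau> \<tau> (tmult a)"
proof -
  assume a: "a \<in> G"
  have "continuous_map \<tau> (prod_topology \<tau> \<tau>) (\<lambda>h. (a, h))"
    using a by (simp add: continuous_map_paired)
  then have "continuous_map \<tau> \<tau> ((\<lambda>(g, h). tmult g h) \<circ> (\<lambda>h. (a, h)))"
    using cont_mult continuous_map_compose by blast
  then show ?thesis by (simp add: o_def)
qed

lemma cont_rmult: "a \<in> G \<Longrightarrow> continuous_map \<tau> \<tau> (\<lambda>h. tmult h a)"
proof -
  assume "a \<in> G"
  moreover have "(\<lambda>h. tmult h a) = tmult a" by (rule ext) (simp add: tmult_commute)
  ultimately show ?thesis using cont_lmult by simp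
qed

lemma homeo_lmult: "a \<in> G \<Longrightarrow> homeomorphic_map \<tau> \<tau> (tmult a)"
  unfolding homeomorphic_map_maps homeomorphic_maps_def
  using G_TN
  by (intro exI[of _ "tmult (tinv a)"]) (auto simp: cont_lmult inv_G tmult_cancel tmult_cancel2)

lemma G_borel: "G \<in> sets (borel :: (nat \<Rightarrow> complex) measure)"
proof -
  have "G \<in> borel_sets_of \<tau>"
    unfolding borel_sets_of_def using top_tau
    by (metis openin_topspace sigma_sets.Basic mem_Collect_eq)
  then show ?thesis using borel_tau by auto
qed

lemma pettis:
  assumes B: "B \<subseteq> G" "B \<in> sets (borel :: (nat \<Rightarrow> complex) measure)"
    and K: "countable K" "K \<subseteq> G" "G \<subseteq> (\<Union>k\<in>K. tmult k ` B)"
  shows "\<exists>W. openin \<tau> W \<and> tone \<in> W \<and> (\<forall>h\<in>W. \<exists>b1\<in>B. \<exists>b2\<in>B. h = tmult b1 (tinv b2))"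
proof -
  have "B \<in> sigma_sets (topspace \<tau>) {U. openin \<tau> U}"
    using borel_tau B unfolding borel_sets_of_def by auto
  then have "bp \<tau> B" by (rule bp_sigma)
  then obtain Q where Q: "openin \<tau> Q" "meager_in \<tau> ((B - Q) \<union> (Q - B))"
    unfolding bp_def by blast
  define M where "M = (B - Q) \<union> (Q - B)"
  have M: "meager_in \<tau> M" using Q by (simp add: M_def)
  have nmG: "\<not> meager_in \<tau> G"
    using baire_nonmeager[OF baire_tau, of G] tone_G by (metis empty_iff openin_topspace top_tau)
  have "\<not> meager_in \<tau> B"
  proof
    assume "meager_in \<tau> B"
    then have "meager_in \<tau> (\<Union>k\<in>K. tmult k ` B)"
      using K homeo_meager homeo_lmult by (intro meager_countable_UN) blast+
    then show False using nmG K(3) meager_mono by blast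
  qed
  then have "Q \<noteq> {}"
    using M meager_mono[of \<tau> M B] by (auto simp: M_def)
  then obtain a0 where a0: "a0 \<in> Q" by blast
  have QG: "Q \<subseteq> G" using Q(1) openin_subset by fastforce
  define W where "W = {h \<in> topspace \<tau>. tmult (tinv h) a0 \<in> Q}"
  have contW: "continuous_map \<tau> \<tau> (\<lambda>h. tmult (tinv h) a0)"
    using cont_rmult[of a0] cont_inv a0 QG continuous_map_compose[of \<tau> \<tau> tinv \<tau> "\<lambda>h. tmult h a0"]
    by (auto simp: o_def)
  have oW: "openin \<tau> W" unfolding W_def
    by (rule openin_continuous_map_preimage[OF contW Q(1)])
  have oneW: "tone \<in> W" unfolding W_def using tone_G a0 by simp
  have "\<forall>h\<in>W. \<exists>b1\<in>B. \<exists>b2\<in>B. h = tmult b1 (tinv b2)"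
  proof
    fix h assume h: "h \<in> W"
    then have hG: "h \<in> G" by (simp add: W_def)
    have hTN: "h \<in> TN" using hG G_TN by auto
    have hom: "homeomorphic_map \<tau> \<tau> (tmult h)" by (rule homeo_lmult[OF hG])
    have oQh: "openin \<tau> (tmult h ` Q)"
      using hom Q(1) homeomorphic_imp_open_map open_map_def by blast
    have a0Qh: "a0 \<in> tmult h ` Q"
      using h hTN by (auto simp: W_def tmult_cancel2 intro!: image_eqI[of _ _ "tmult (tinv h) a0"])
    have "\<not> meager_in \<tau> (Q \<inter> tmult h ` Q)"
      using baire_nonmeager[OF baire_tau] Q(1) oQh a0 a0Qh by blast
    moreover have "meager_in \<tau> (M \<union> tmult h ` M)"
      using M homeo_meager[OF hom M] meager_Un by blast
    ultimately have "\<not> (Q \<inter> tmult h ` Q \<subseteq> M \<union> tmult h ` M)"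
      using meager_mono by blast
    then obtain a where a: "a \<in> Q" "a \<in> tmult h ` Q" "a \<notin> M" "a \<notin> tmult h ` M" by blast
    then obtain ob where ob: "ob \<in> Q" "a = tmult h ob" by blast
    have oM: "ob \<notin> M" using a(4) ob by blast
    have aB: "a \<in> B" using a M_def by blast
    have oB: "ob \<in> B" using ob oM M_def by blast
    have "ob \<in> TN" using ob QG G_TN by auto
    then have "h = tmult a (tinv ob)"
      using ob by (simp add: tmult_assoc tmult_tinv2)
    then show "\<exists>b1\<in>B. \<exists>b2\<in>B. h = tmult b1 (tinv b2)" using aB oB by blast
  qed
  then show ?thesis using oW oneW by blast
qed

lemma autocont:
  assumes r: "r > 0"
  shows "\<exists>W. openin \<tau> W \<and> tone \<in> W \<and> (\<forall>h\<in>W. \<forall>i\<le>n. cmod (h i - 1) < r)"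
proof -
  define oc where "oc k = {y::nat\<Rightarrow>complex. \<forall>i\<le>n. cmod (y i - k i) < r/2}" for k
  define B where "B = G \<inter> oc tone"
  have Bb: "B \<in> sets (borel :: (nat \<Rightarrow> complex) measure)"
    unfolding B_def oc_def by (rule sets.Int[OF G_borel borel_open[OF open_ocyl]])
  obtain F' where F': "F' \<subseteq> oc ` G" "countable F'" "\<Union>F' = \<Union>(oc ` G)"
    using Lindelof[of "oc ` G"] open_ocyl unfolding oc_def by blast
  have "\<forall>S\<in>F'. \<exists>k. k \<in> G \<and> S = oc k" using F'(1) by blast
  then obtain ch where ch: "\<And>S. S \<in> F' \<Longrightarrow> ch S \<in> G \<and> S = oc (ch S)" by metis
  define K where "K = ch ` F'"
  have K: "countable K" "K \<subseteq> G" using F' ch by (auto simp: K_def)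
  have cov: "G \<subseteq> (\<Union>k\<in>K. tmult k ` B)"
  proof
    fix g assume g: "g \<in> G"
    have "g \<in> oc g" using r by (simp add: oc_def)
    then obtain S where S: "S \<in> F'" "g \<in> S" using F'(3) g by blast
    let ?k = "ch S"
    have k: "?k \<in> G" "g \<in> oc ?k" using ch[OF S(1)] S by auto
    have kTN: "?k \<in> TN" using k G_TN by auto
    have "tmult (tinv ?k) g \<in> B"
      unfolding B_def oc_def using k kTN g mult_G inv_G
      by (auto simp: oc_def tmult_def tinv_def tone_def unit_inv_mult TN_unit)
    moreover have "g = tmult ?k (tmult (tinv ?k) g)" using kTN by (simp add: tmult_cancel2)
    ultimately show "g \<in> (\<Union>k\<in>K. tmult k ` B)" using S(1) K_def by blast
  qed
  obtain W where W: "openin \<tau> W" "tone \<in> W" "\<forall>h\<in>W. \<exists>b1\<in>B. \<exists>b2\<in>B. h = tmult b1 (tinv b2)"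
    using pettis[OF _ Bb K cov] B_def by blast
  have "\<forall>h\<in>W. \<forall>i\<le>n. cmod (h i - 1) < r"
  proof (intro ballI allI impI)
    fix h i assume h: "h \<in> W" and i: "i \<le> n"
    obtain b1 b2 where b: "b1 \<in> B" "b2 \<in> B" "h = tmult b1 (tinv b2)" using W(3) h by blast
    have u: "cmod (b2 i) = 1" using b(2) G_TN TN_unit by (auto simp: B_def)
    have "cmod (h i - 1) = cmod (inverse (b2 i) * b1 i - 1)"
      by (simp add: b(3) tmult_def tinv_def mult.commute)
    also have "\<dots> = cmod (b1 i - b2 i)" by (rule unit_inv_mult[OF u])
    also have "\<dots> \<le> cmod (b1 i - 1) + cmod (b2 i - 1)"
      using norm_triangle_ineq4[of "b1 i - 1" "b2 i - 1"] by simp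
    also have "\<dots> < r/2 + r/2"
      using b(1,2) i by (intro add_strict_mono) (auto simp: B_def oc_def tone_def)
    finally show "cmod (h i - 1) < r" by simp
  qed
  then show ?thesis using W by blast
qed

end



lemma TN_top_sigma: "{U. openin TN_top U} = (\<inter>) TN ` {S. open S}"
  unfolding TN_top_def by (auto simp: openin_open)

lemma approx_lemma:
  fixes d a1 a2 p c :: complex
  assumes "cmod d = 1" "cmod a1 = 1" "cmod c = 1"
    and "cmod (d*a1 - p) < e" "cmod (d*a2 - p*c) < e"
  shows "cmod (inverse a1 * a2 - c) < 2*e"
proof -
  have nz: "d \<noteq> 0" "a1 \<noteq> 0" using assms by auto
  have "inverse a1 * a2 - c = inverse (d*a1) * (d*a2 - d*a1*c)"
    using nz by (simp add: field_simps)
  then have "cmod (inverse a1 * a2 - c) = cmod (d*a2 - d*a1*c)"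
    using assms by (simp add: norm_mult norm_inverse)
  also have "\<dots> \<le> cmod (d*a2 - p*c) + cmod (p*c - d*a1*c)"
    using norm_triangle_ineq[of "d*a2 - p*c" "p*c - d*a1*c"] by simp
  also have "cmod (p*c - d*a1*c) = cmod (d*a1 - p)"
  proof -
    have "p*c - d*a1*c = (p - d*a1) * c" by (simp add: algebra_simps)
    then show ?thesis using assms by (simp add: norm_mult norm_minus_commute)
  qed
  finally show ?thesis using assms by simp
qed

locale setting2 = setting +
  assumes sd: "strongly_dense G"
begin

lemma match: "y \<in> TN \<Longrightarrow> \<exists>g\<in>G. \<forall>i\<le>n. g i = y i"
  using sd unfolding strongly_dense_def TN_def by blast

lemma G_meets_open:
  assumes "openin TN_top U" "U \<noteq> {}"
  shows "\<exists>g\<in>G. g \<in> U"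
proof -
  obtain y where y: "y \<in> U" using assms by blast
  have yTN: "y \<in> TN" using y assms(1) openin_subset by fastforce
  obtain n r where nr: "r > 0" "\<forall>z\<in>TN. (\<forall>i\<le>n. cmod (z i - y i) < r) \<longrightarrow> z \<in> U"
    using CYL[OF assms(1) y] by blast
  obtain g where g: "g \<in> G" "\<forall>i\<le>n. g i = y i" using match[OF yTN] by blast
  have "g \<in> TN" using g G_TN by auto
  then show ?thesis using g nr by auto
qed

lemma orbit_dense:
  assumes x: "x \<in> TN"
  shows "TN_top closure_of (orbit \<tau> tmult x) = topspace TN_top"
  unfolding dense_intersects_open
proof (intro allI impI)
  fix U assume U: "openin TN_top U \<and> U \<noteq> {}"
  then obtain y where y: "y \<in> U" by blast
  have yTN: "y \<in> TN" using y U openin_subset by fastforce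
  obtain n r where nr: "r > 0" "\<forall>z\<in>TN. (\<forall>i\<le>n. cmod (z i - y i) < r) \<longrightarrow> z \<in> U"
    using CYL[of U y] U y by blast
  have "tmult y (tinv x) \<in> TN" using x yTN by (simp add: tmult_TN tinv_TN)
  then obtain g where g: "g \<in> G" "\<forall>i\<le>n. g i = tmult y (tinv x) i" using match by blast
  have gx: "tmult g x \<in> TN" using g G_TN x tmult_TN by auto
  have "\<forall>i\<le>n. tmult g x i = y i"
    using g x TN_nz by (auto simp: tmult_def tinv_def)
  then have "tmult g x \<in> U" using nr gx by auto
  moreover have "tmult g x \<in> orbit \<tau> tmult x" using g by (auto simp: orbit_def)
  ultimately show "orbit \<tau> tmult x \<inter> U \<noteq> {}" by blast
qed

lemma G_meager:
  assumes ne: "G \<noteq> TN"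
  shows "meager_in TN_top G"
proof (rule ccontr)
  assume nm: "\<not> meager_in TN_top G"
  have TNb: "TN \<in> sigma_sets UNIV {S. open S}"
    using borel_closed[OF compact_imp_closed[OF compact_TN]] by (simp add: sets_borel)
  have "G \<in> sigma_sets UNIV {S. open S}" using G_borel by (simp add: sets_borel)
  then have "TN \<inter> G \<in> (\<inter>) TN ` sigma_sets UNIV {S. open S}" by blast
  then have "G \<in> sigma_sets TN ((\<inter>) TN ` {S. open S})"
    using sigma_sets_Int[OF TNb] G_TN by (metis Int_absorb1 top_greatest)
  then have "bp TN_top G" using bp_sigma[of G TN_top] TN_top_sigma by simp
  then obtain Q where Q: "openin TN_top Q" "meager_in TN_top ((G - Q) \<union> (Q - G))"
    unfolding bp_def by blast
  define M where "M = (G - Q) \<union> (Q - G)"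
  have M: "meager_in TN_top M" using Q by (simp add: M_def)
  have "Q \<noteq> {}" using M nm meager_mono[of TN_top M G] by (auto simp: M_def)
  then obtain o0 where o0: "o0 \<in> Q" by blast
  have QTN: "Q \<subseteq> TN" using Q(1) openin_subset by fastforce
  have o0TN: "o0 \<in> TN" using o0 QTN by auto
  have "TN \<subseteq> G"
  proof
    fix h assume h: "h \<in> TN"
    have hoTN: "tmult h o0 \<in> TN" using h o0TN tmult_TN by auto
    define U1 where "U1 = {g \<in> topspace TN_top. tmult (tmult h o0) g \<in> Q}"
    have oU1: "openin TN_top U1" unfolding U1_def
      by (rule openin_continuous_map_preimage[OF cont_tmult_TN[OF hoTN] Q(1)])
    have "tinv h \<in> U1"
      using h o0 tinv_TN by (auto simp: U1_def tmult_assoc tmult_commute[of o0] tmult_cancel2)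
    then obtain g where g: "g \<in> G" "g \<in> U1" using G_meets_open[OF oU1] by blast
    have gTN: "g \<in> TN" using g G_TN by auto
    define c where "c = tmult h g"
    have cTN: "c \<in> TN" using h gTN tmult_TN c_def by auto
    have co0: "tmult c o0 \<in> Q" using g(2)
      by (simp add: U1_def c_def tmult_assoc tmult_commute[of o0])
    have hom: "homeomorphic_map TN_top TN_top (tmult c)" by (rule homeo_tmult_TN[OF cTN])
    have oQc: "openin TN_top (tmult c ` Q)"
      using hom Q(1) homeomorphic_imp_open_map open_map_def by blast
    have "\<not> meager_in TN_top (Q \<inter> tmult c ` Q)"
      using baire_nonmeager[OF TN_baire] Q(1) oQc o0 co0 by blast
    moreover have "meager_in TN_top (M \<union> tmult c ` M)"
      using M homeo_meager[OF hom M] meager_Un by blast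
    ultimately have "\<not> (Q \<inter> tmult c ` Q \<subseteq> M \<union> tmult c ` M)"
      using meager_mono by blast
    then obtain a where a: "a \<in> Q" "a \<in> tmult c ` Q" "a \<notin> M" "a \<notin> tmult c ` M" by blast
    then obtain ob where ob: "ob \<in> Q" "a = tmult c ob" by blast
    have oM: "ob \<notin> M" using a(4) ob by blast
    have aG: "a \<in> G" using a M_def by blast
    have oG: "ob \<in> G" using ob oM M_def by blast
    have "ob \<in> TN" using ob QTN by auto
    then have "c = tmult a (tinv ob)"
      using ob by (simp add: tmult_assoc tmult_tinv2)
    then have cG: "c \<in> G" using aG oG mult_G inv_G by simp
    have "h = tmult c (tinv g)" using gTN
      by (simp add: c_def tmult_assoc tmult_tinv2)
    then show "h \<in> G" using cG g mult_G inv_G by simp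
  qed
  then show False using ne G_TN by blast
qed

lemma orbit_meager:
  assumes "G \<noteq> TN" "x \<in> TN"
  shows "meager_in TN_top (orbit \<tau> tmult x)"
proof -
  have "orbit \<tau> tmult x = tmult x ` G"
    by (auto simp: orbit_def tmult_commute)
  then show ?thesis
    using homeo_meager[OF homeo_tmult_TN[OF assms(2)] G_meager[OF assms(1)]] by simp
qed

lemma LB:
  assumes A: "A \<subseteq> G" and D: "countable D" "D \<subseteq> G" "G \<subseteq> (\<Union>d\<in>D. tmult d ` A)"
  shows "\<exists>r>0. \<forall>c\<in>TN. (\<forall>i\<le>m. cmod (c i - 1) < r) \<longrightarrow>
           (\<forall>\<delta>>0. \<exists>a1\<in>A. \<exists>a2\<in>A. \<forall>i\<le>m. cmod (inverse (a1 i) * a2 i - c i) < \<delta>)"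
proof -
  define P where "P d = {y \<in> TN. \<exists>a\<in>A. \<forall>i\<le>m. y i = d i * a i}" for d
  have cover: "TN \<subseteq> (\<Union>d\<in>D. P d)"
  proof
    fix y assume y: "y \<in> TN"
    obtain g where g: "g \<in> G" "\<forall>i\<le>m. g i = y i" using match[OF y] by blast
    then obtain d a where da: "d \<in> D" "a \<in> A" "g = tmult d a" using D(3) by blast
    then have "\<forall>i\<le>m. y i = d i * a i" using g by (simp add: tmult_def)
    then have "y \<in> P d" unfolding P_def using y da(2) by blast
    then show "y \<in> (\<Union>d\<in>D. P d)" using da(1) by blast
  qed
  have "\<exists>d\<in>D. TN_top interior_of (TN_top closure_of P d) \<noteq> {}"
  proof (rule ccontr)
    assume "\<not> ?thesis"
    then have "\<forall>d\<in>D. nowhere_dense_in TN_top (P d)"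
      by (auto simp: nowhere_dense_in_def P_def)
    then have "meager_in TN_top (\<Union>d\<in>D. P d)"
      by (intro meager_countable_UN D(1)) (auto simp: meager_in_def P_def intro!: exI[of _ "\<lambda>n. P _"])
    then have "meager_in TN_top TN" using cover meager_mono by blast
    moreover have "TN \<noteq> {}" using tone_TN by auto
    moreover have "openin TN_top TN" using openin_topspace[of TN_top] by simp
    ultimately show False using baire_nonmeager[OF TN_baire, of TN] by blast
  qed
  then obtain d p where dp: "d \<in> D" "p \<in> TN_top interior_of (TN_top closure_of P d)" by blast
  let ?Q = "TN_top interior_of (TN_top closure_of P d)"
  have oQ: "openin TN_top ?Q" by simp
  obtain n r where nr: "r > 0" "\<forall>y\<in>TN. (\<forall>i\<le>n. cmod (y i - p i) < r) \<longrightarrow> y \<in> ?Q"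
    using CYL[OF oQ dp(2)] by blast
  have Qcl: "?Q \<subseteq> TN_top closure_of P d" by (rule interior_of_subset)
  have pTN: "p \<in> TN" using dp(2) interior_of_subset_topspace by fastforce
  have dTN: "d \<in> TN" using dp(1) D(2) G_TN by auto
  have "\<forall>c\<in>TN. (\<forall>i\<le>m. cmod (c i - 1) < r) \<longrightarrow>
           (\<forall>\<delta>>0. \<exists>a1\<in>A. \<exists>a2\<in>A. \<forall>i\<le>m. cmod (inverse (a1 i) * a2 i - c i) < \<delta>)"
  proof (intro ballI impI allI)
    fix c :: "nat \<Rightarrow> complex" and \<delta> :: real
    assume c: "c \<in> TN" "\<forall>i\<le>m. cmod (c i - 1) < r" and \<delta>: "\<delta> > 0"
    define y2 where "y2 = (\<lambda>i. if i \<le> m then p i * c i else p i)"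
    have y2TN: "y2 \<in> TN" unfolding y2_def using pTN c
      by (intro TN_I) (auto simp: norm_mult TN_unit)
    have "\<forall>i\<le>n. cmod (y2 i - p i) < r"
    proof (intro allI impI)
      fix i assume "i \<le> n"
      show "cmod (y2 i - p i) < r"
      proof (cases "i \<le> m")
        case True
        have "y2 i - p i = p i * (c i - 1)" using True by (simp add: y2_def algebra_simps)
        then show ?thesis using True c pTN by (simp add: norm_mult TN_unit)
      next
        case False then show ?thesis using nr(1) by (simp add: y2_def)
      qed
    qed
    then have y2cl: "y2 \<in> TN_top closure_of P d" using nr(2) y2TN Qcl by blast
    have pcl: "p \<in> TN_top closure_of P d" using dp(2) Qcl by blast
    have near: "\<exists>a\<in>A. \<forall>i\<le>m. cmod (d i * a i - q i) < \<delta>/2"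
      if q: "q \<in> TN_top closure_of P d" for q
    proof -
      have qTN: "q \<in> TN" using q closure_of_subset_topspace by fastforce
      let ?N = "{y\<in>TN. \<forall>i\<le>m. cmod (y i - q i) < \<delta>/2}"
      have oN: "openin TN_top ?N" by (rule openin_cyl)
      have qN: "q \<in> ?N" using qTN \<delta> by simp
      have cl: "\<forall>T. q \<in> T \<and> openin TN_top T \<longrightarrow> (\<exists>y. y \<in> P d \<and> y \<in> T)"
        using q by (simp add: in_closure_of)
      have "q \<in> ?N \<and> openin TN_top ?N \<longrightarrow> (\<exists>y. y \<in> P d \<and> y \<in> ?N)"
        by (rule spec[OF cl])
      then have "\<exists>y. y \<in> P d \<and> y \<in> ?N" using oN qN by blast
      then obtain y where "y \<in> P d" "y \<in> ?N" by blast
      then show ?thesis unfolding P_def by force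
    qed
    obtain a1 where a1: "a1 \<in> A" "\<forall>i\<le>m. cmod (d i * a1 i - p i) < \<delta>/2" using near[OF pcl] by blast
    obtain a2 where a2: "a2 \<in> A" "\<forall>i\<le>m. cmod (d i * a2 i - y2 i) < \<delta>/2" using near[OF y2cl] by blast
    have "\<forall>i\<le>m. cmod (inverse (a1 i) * a2 i - c i) < \<delta>"
    proof (intro allI impI)
      fix i assume i: "i \<le> m"
      have u: "cmod (d i) = 1" "cmod (a1 i) = 1" "cmod (c i) = 1"
        using dTN a1(1) A G_TN c(1) TN_unit by auto
      have h1: "cmod (d i * a1 i - p i) < \<delta>/2" using a1(2) i by blast
      have "cmod (d i * a2 i - y2 i) < \<delta>/2" using a2(2) i by blast
      then have h2: "cmod (d i * a2 i - p i * c i) < \<delta>/2" using i by (simp add: y2_def)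
      have "cmod (inverse (a1 i) * a2 i - c i) < 2 * (\<delta>/2)"
        by (rule approx_lemma[OF u h1 h2])
      then show "cmod (inverse (a1 i) * a2 i - c i) < \<delta>" by simp
    qed
    then show "\<exists>a1\<in>A. \<exists>a2\<in>A. \<forall>i\<le>m. cmod (inverse (a1 i) * a2 i - c i) < \<delta>"
      using a1(1) a2(1) by blast
  qed
  then show ?thesis using nr(1) by blast
qed

end



lemma pow_diff:
  fixes a c :: complex
  assumes "cmod a = 1" "cmod c = 1"
  shows "cmod (a^j - c^j) \<le> real j * cmod (a - c)"
proof (induction j)
  case 0 then show ?case by simp
next
  case (Suc j)
  have "a^Suc j - c^Suc j = a * (a^j - c^j) + c^j * (a - c)" by (simp add: algebra_simps)
  then have "cmod (a^Suc j - c^Suc j) \<le> cmod (a * (a^j - c^j)) + cmod (c^j * (a - c))"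
    by (metis norm_triangle_ineq)
  also have "\<dots> = cmod (a^j - c^j) + cmod (a - c)" using assms by (simp add: norm_mult norm_power)
  also have "\<dots> \<le> real j * cmod (a - c) + cmod (a - c)" using Suc by simp
  finally show ?case by (simp add: algebra_simps)
qed

lemma exp_small: "cmod (u::complex) \<le> 1/2 \<Longrightarrow> cmod (exp u - 1) \<le> 3/2 * cmod u"
  using norm_exp_bounds(2) by blast

lemma Ln_unit_bound:
  assumes "cmod z = 1"
  shows "cmod (Ln z) \<le> pi" "Re (Ln z) = 0"
proof -
  have nz: "z \<noteq> 0" using assms by auto
  show re: "Re (Ln z) = 0" using nz assms by simp
  have "cmod (Ln z) = \<bar>Im (Ln z)\<bar>" by (rule cmod_eq_Im[OF re])
  also have "\<dots> \<le> pi" using mpi_less_Im_Ln[OF nz] Im_Ln_le_pi[OF nz] by simp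
  finally show "cmod (Ln z) \<le> pi" .
qed

lemma Ln_near_1: "e > 0 \<Longrightarrow> \<exists>\<rho>>0. \<forall>z. cmod (z - 1) < \<rho> \<longrightarrow> cmod (Ln z) < e"
proof -
  assume e: "e > 0"
  have "(1::complex) \<notin> \<real>\<^sub>\<le>\<^sub>0" by (simp add: nonpos_Reals_def)
  then have "continuous (at 1) Ln" by (rule continuous_at_Ln)
  then obtain d where "d > 0" "\<forall>z. dist z 1 < d \<longrightarrow> dist (Ln z) (Ln 1) < e"
    using e unfolding continuous_at_eps_delta by blast
  then show ?thesis by (auto simp: dist_norm)
qed

lemma w_pow:
  fixes L :: complex and M j :: nat
  assumes "Re L = 0" "cmod L \<le> 1/2" "j \<le> M" "M > 0"
  shows "cmod (exp (L / of_nat M) ^ j - 1) \<le> 3/2 * cmod L"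
proof -
  have "exp (L / of_nat M) ^ j = exp (of_nat j * (L / of_nat M))" by (rule exp_of_nat_mult[symmetric])
  moreover have "cmod (of_nat j * (L / of_nat M)) = real j / real M * cmod L"
    by (simp add: norm_mult norm_divide)
  moreover have jm: "real j / real M \<le> 1" using assms by simp
  moreover have "real j / real M * cmod L \<le> 1 * cmod L"
    by (rule mult_right_mono[OF jm]) simp
  ultimately have n: "cmod (of_nat j * (L / of_nat M)) \<le> cmod L"
    by simp
  then have "cmod (exp (of_nat j * (L / of_nat M)) - 1) \<le> 3/2 * cmod (of_nat j * (L / of_nat M))"
    using assms(2) by (intro exp_small) linarith
  also have "\<dots> \<le> 3/2 * cmod L" using n by simp
  finally show ?thesis using \<open>exp (L / of_nat M) ^ j = _\<close> by simp
qed

lemma coord_est: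
  fixes b w a x :: complex and M j :: nat
  assumes u: "cmod b = 1" "cmod w = 1" "cmod a = 1" "cmod x = 1"
    and j: "j \<le> M" and bw: "real M * cmod (b - w) \<le> e1" and wj: "cmod (w^j - 1) \<le> e2"
  shows "cmod (b^j * x - x) \<le> e1 + e2"
    and "cmod (b^j * (inverse a * x) - x) \<le> e1 + e2 + cmod (a - 1)"
proof -
  have "cmod (b^j - w^j) \<le> real j * cmod (b - w)" by (rule pow_diff[OF u(1,2)])
  also have "\<dots> \<le> real M * cmod (b - w)" using j by (intro mult_right_mono) auto
  finally have bj: "cmod (b^j - w^j) \<le> e1" using bw by linarith
  have "cmod (b^j - 1) \<le> cmod (b^j - w^j) + cmod (w^j - 1)"
    using norm_triangle_ineq[of "b^j - w^j" "w^j - 1"] by simp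
  then have b1: "cmod (b^j - 1) \<le> e1 + e2" using bj wj by linarith
  have "b^j * x - x = (b^j - 1) * x" by (simp add: algebra_simps)
  then show "cmod (b^j * x - x) \<le> e1 + e2" using b1 u by (simp add: norm_mult)
  have anz: "a \<noteq> 0" using u by auto
  have "b^j * (inverse a * x) - x = ((b^j - 1) * inverse a + (inverse a - 1)) * x"
    by (simp add: algebra_simps)
  then have "cmod (b^j * (inverse a * x) - x) = cmod ((b^j - 1) * inverse a + (inverse a - 1))"
    using u by (simp add: norm_mult)
  also have "\<dots> \<le> cmod ((b^j - 1) * inverse a) + cmod (inverse a - 1)" by (rule norm_triangle_ineq)
  also have "cmod ((b^j - 1) * inverse a) = cmod (b^j - 1)" using u by (simp add: norm_mult norm_inverse)
  also have "cmod (inverse a - 1) = cmod (a - 1)"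
  proof -
    have "inverse a - 1 = inverse a * (1 - a)" using anz by (simp add: field_simps)
    then show ?thesis using u by (simp add: norm_mult norm_inverse norm_minus_commute)
  qed
  finally show "cmod (b^j * (inverse a * x) - x) \<le> e1 + e2 + cmod (a - 1)" using b1 by linarith
qed




context setting2
begin

lemma local_orbit_int:
  assumes U: "openin TN_top U" and V: "openin \<tau> V" "tone \<in> V" "\<forall>g\<in>V. tinv g \<in> V"
    and x: "x \<in> U"
  shows "TN_top interior_of (TN_top closure_of (local_orbit tmult x U V)) \<noteq> {}"
proof -
  have xTN: "x \<in> TN" using x U openin_subset by fastforce
  obtain n \<epsilon> where n\<epsilon>: "\<epsilon> > 0" "\<forall>y\<in>TN. (\<forall>i\<le>n. cmod (y i - x i) < \<epsilon>) \<longrightarrow> y \<in> U"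
    using CYL[OF U x] by blast
  define \<eta> where "\<eta> = min (\<epsilon>/8) (1/4)"
  have \<eta>: "\<eta> > 0" "\<eta> \<le> \<epsilon>/8" "\<eta> \<le> 1/4" using n\<epsilon> by (auto simp: \<eta>_def)
  obtain W where W: "openin \<tau> W" "tone \<in> W" "\<forall>h\<in>W. \<forall>i\<le>n. cmod (h i - 1) < \<eta>"
    using autocont[OF \<eta>(1)] by blast
  define A where "A = V \<inter> W"
  have oA: "openin \<tau> A" using V W by (simp add: A_def openin_Int)
  have AG: "A \<subseteq> G" using oA openin_subset by fastforce
  obtain C where C: "countable C" "C \<subseteq> G" "\<tau> closure_of C = G"
    using pg unfolding polish_group_topology_for_def polish_space_def separable_space_def by auto
  have cover: "G \<subseteq> (\<Union>d\<in>C. tmult d ` A)"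
  proof
    fix g assume g: "g \<in> G"
    define S where "S = {h \<in> topspace \<tau>. tmult (tinv h) g \<in> A}"
    have contS: "continuous_map \<tau> \<tau> (\<lambda>h. tmult (tinv h) g)"
      using cont_rmult[OF g] cont_inv continuous_map_compose[of \<tau> \<tau> tinv \<tau> "\<lambda>h. tmult h g"]
      by (auto simp: o_def)
    have oS: "openin \<tau> S" unfolding S_def by (rule openin_continuous_map_preimage[OF contS oA])
    have gTN: "g \<in> TN" using g G_TN by auto
    have "g \<in> S" using g gTN V(2) W(2) by (simp add: S_def A_def tmult_tinv)
    then have "C \<inter> S \<noteq> {}" using C(3) oS dense_intersects_open[of \<tau> C] by auto
    then obtain d where d: "d \<in> C" "tmult (tinv d) g \<in> A" by (auto simp: S_def)
    have "d \<in> TN" using d C G_TN by auto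
    then have "g = tmult d (tmult (tinv d) g)" by (simp add: tmult_cancel2)
    then show "g \<in> (\<Union>d\<in>C. tmult d ` A)" using d by blast
  qed
  obtain \<rho> where \<rho>: "\<rho> > 0" "\<forall>z. cmod (z - 1) < \<rho> \<longrightarrow> cmod (Ln z) < \<eta>"
    using Ln_near_1[OF \<eta>(1)] by blast
  define T where "T = {y \<in> TN. \<forall>i\<le>n. cmod (y i - x i) < \<rho>}"
  have oT: "openin TN_top T" unfolding T_def by (rule openin_cyl)
  have xT: "x \<in> T" using xTN \<rho> by (simp add: T_def)
  have "T \<subseteq> TN_top closure_of (local_orbit tmult x U V)"
  proof
    fix y assume yT: "y \<in> T"
    have yTN: "y \<in> TN" using yT by (simp add: T_def)
    have "\<forall>N. y \<in> N \<and> openin TN_top N \<longrightarrow> (\<exists>q. q \<in> local_orbit tmult x U V \<and> q \<in> N)"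
    proof (intro allI impI)
      fix N assume N: "y \<in> N \<and> openin TN_top N"
      obtain m0 \<delta>0 where m0: "\<delta>0 > 0" "\<forall>q\<in>TN. (\<forall>i\<le>m0. cmod (q i - y i) < \<delta>0) \<longrightarrow> q \<in> N"
        using CYL[of N y] N by blast
      define m where "m = max m0 n"
      obtain r where r: "r > 0" "\<forall>c\<in>TN. (\<forall>i\<le>m. cmod (c i - 1) < r) \<longrightarrow>
           (\<forall>\<delta>>0. \<exists>a1\<in>A. \<exists>a2\<in>A. \<forall>i\<le>m. cmod (inverse (a1 i) * a2 i - c i) < \<delta>)"
        using LB[OF AG C(1,2) cover, of m] by blast
      define z where "z i = y i * inverse (x i)" for i
      have zu: "cmod (z i) = 1" for i
        using xTN yTN by (simp add: z_def norm_mult norm_inverse TN_unit)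
      have znz: "z i \<noteq> 0" for i using zu[of i] by auto
      define L where "L i = Ln (z i)" for i
      have Lpi: "cmod (L i) \<le> pi" "Re (L i) = 0" for i
        using Ln_unit_bound[OF zu] by (simp_all add: L_def)
      have Lsmall: "cmod (L i) < \<eta>" if "i \<le> n" for i
      proof -
        have "z i - 1 = (y i - x i) * inverse (x i)" using TN_nz[OF xTN] by (simp add: z_def field_simps)
        then have "cmod (z i - 1) = cmod (y i - x i)"
          using xTN by (simp add: norm_mult norm_inverse TN_unit)
        then show ?thesis using yT that \<rho>(2) by (auto simp: T_def L_def)
      qed
      obtain M :: nat where M: "real M > 3 * pi / r + 8" using reals_Archimedean2 by blast
      have pr: "3 * pi / r > 0" using r(1) by simp
      have M8: "real M > 8" using M pr by linarith
      have M0: "M > 0" using M8 by simp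
      have piM: "pi / real M \<le> 1/2" using M8 pi_less_4 by (simp add: field_simps)
      have "real M * r > 3 * pi" using M r(1) pr by (simp add: field_simps)
      then have "3 * pi < 2 * (real M * r)" using pi_gt_zero by linarith
      then have piMr: "3/2 * (pi / real M) < r" using M0 by (simp add: field_simps)
      define w where "w i = (if i \<le> m then exp (L i / of_nat M) else 1)" for i
      have wu: "cmod (w i) = 1" for i using Lpi(2)[of i] by (simp add: w_def)
      have wTN: "w \<in> TN" using wu by (rule TN_I)
      have w1: "\<forall>i\<le>m. cmod (w i - 1) < r"
      proof (intro allI impI)
        fix i assume i: "i \<le> m"
        have "cmod (L i / of_nat M) = cmod (L i) / real M" by (simp add: norm_divide)
        also have "\<dots> \<le> pi / real M" using Lpi(1)[of i] M0 by (simp add: divide_right_mono)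
        finally have LM: "cmod (L i / of_nat M) \<le> pi / real M" .
        have "cmod (L i / of_nat M) \<le> 1/2" using LM piM by linarith
        then have "cmod (exp (L i / of_nat M) - 1) \<le> 3/2 * cmod (L i / of_nat M)" by (rule exp_small)
        then have "cmod (w i - 1) \<le> 3/2 * cmod (L i / of_nat M)"
          using i by (simp add: w_def)
        also have "\<dots> \<le> 3/2 * (pi / real M)" using LM by simp
        finally show "cmod (w i - 1) < r" using piMr by linarith
      qed
      define e1 where "e1 = min \<delta>0 (\<epsilon>/4)"
      have e1: "e1 > 0" "e1 \<le> \<delta>0" "e1 \<le> \<epsilon>/4" using m0(1) n\<epsilon>(1) by (auto simp: e1_def)
      define \<delta> where "\<delta> = e1 / real M"
      have \<delta>: "\<delta> > 0" using e1 M0 by (simp add: \<delta>_def)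
      obtain a1 a2 where a: "a1 \<in> A" "a2 \<in> A" "\<forall>i\<le>m. cmod (inverse (a1 i) * a2 i - w i) < \<delta>"
        using r(2) wTN w1 \<delta> by blast
      have a1TN: "a1 \<in> TN" and a2TN: "a2 \<in> TN" using a AG G_TN by auto
      define b where "b l = inverse (a1 l) * a2 l" for l
      have bu: "cmod (b l) = 1" for l using a1TN a2TN by (simp add: b_def norm_mult norm_inverse TN_unit)
      have bwS: "real M * cmod (b l - w l) < e1" if "l \<le> m" for l
      proof -
        have "cmod (b l - w l) < \<delta>" using a(3) that by (simp add: b_def)
        then have "real M * cmod (b l - w l) < real M * \<delta>" using M0 by simp
        then show ?thesis using M0 by (simp add: \<delta>_def)
      qed
      define k where "k = 2*M - 1"
      have kS: "Suc k = 2*M" using M0 by (simp add: k_def)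
      define gs where "gs i = (if even i then tinv a1 else a2)" for i :: nat
      define xs where "xs i = (\<lambda>l. b l ^ (i div 2) * (if odd i then inverse (a1 l) * x l else x l))" for i
      have a1V: "a1 \<in> V" "a2 \<in> V" using a by (auto simp: A_def)
      have gsV: "\<forall>i\<le>k. gs i \<in> V" using a1V V(3) by (simp add: gs_def)
      have xs0: "xs 0 = x" by (simp add: xs_def)
      have step: "\<forall>i\<le>k. xs (Suc i) = tmult (gs i) (xs i)"
      proof (intro allI impI)
        fix i assume "i \<le> k"
        show "xs (Suc i) = tmult (gs i) (xs i)"
        proof (cases "even i")
          case True
          then show ?thesis
            by (intro ext) (simp add: xs_def gs_def tmult_def tinv_def even_Suc_div_two algebra_simps)
        next
          case False
          then show ?thesis
            by (intro ext) (simp add: xs_def gs_def tmult_def tinv_def odd_Suc_div_two b_def algebra_simps)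
        qed
      qed
      have xsTN: "xs i \<in> TN" for i
        using bu a1TN xTN by (intro TN_I) (simp add: xs_def norm_mult norm_power norm_inverse TN_unit)
      have xsU: "\<forall>i\<le>Suc k. xs i \<in> U"
      proof (intro allI impI)
        fix i assume i: "i \<le> Suc k"
        have j: "i div 2 \<le> M" using i kS by simp
        have "\<forall>l\<le>n. cmod (xs i l - x l) < \<epsilon>"
        proof (intro allI impI)
          fix l assume l: "l \<le> n"
          have lm: "l \<le> m" using l by (simp add: m_def)
          have wl: "w l = exp (L l / of_nat M)" using lm by (simp add: w_def)
          have Ll: "cmod (L l) \<le> 1/2" using Lsmall[OF l] \<eta>(3) by linarith
          have wj: "cmod (w l ^ (i div 2) - 1) \<le> 3/2 * cmod (L l)"
            unfolding wl by (rule w_pow[OF Lpi(2) Ll j M0])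
          have bw: "real M * cmod (b l - w l) \<le> e1" using bwS[OF lm] by simp
          have ce: "cmod (b l ^ (i div 2) * x l - x l) \<le> e1 + 3/2 * cmod (L l)"
               "cmod (b l ^ (i div 2) * (inverse (a1 l) * x l) - x l) \<le> e1 + 3/2 * cmod (L l) + cmod (a1 l - 1)"
            using coord_est[OF bu wu TN_unit[OF a1TN] TN_unit[OF xTN] j bw wj] by auto
          have a1l: "cmod (a1 l - 1) < \<eta>" using a(1) W(3) l by (auto simp: A_def)
          have "e1 + 3/2 * cmod (L l) + cmod (a1 l - 1) < \<epsilon>"
            using e1(3) Lsmall[OF l] a1l \<eta>(2) n\<epsilon>(1) by linarith
          note tot = this
          have nn: "0 \<le> cmod (a1 l - 1)" by simp
          show "cmod (xs i l - x l) < \<epsilon>"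
          proof (cases "odd i")
            case True
            then have "cmod (xs i l - x l) = cmod (b l ^ (i div 2) * (inverse (a1 l) * x l) - x l)" by (simp add: xs_def)
            then show ?thesis using ce(2) tot by linarith
          next
            case False
            then have "cmod (xs i l - x l) = cmod (b l ^ (i div 2) * x l - x l)" by (simp add: xs_def)
            then show ?thesis using ce(1) tot nn by linarith
          qed
        qed
        then show "xs i \<in> U" using n\<epsilon>(2) xsTN by blast
      qed
      have final: "xs (Suc k) \<in> N"
      proof -
        have xsk: "xs (Suc k) = (\<lambda>l. b l ^ M * x l)" using kS by (simp add: xs_def)
        have "\<forall>l\<le>m0. cmod (xs (Suc k) l - y l) < \<delta>0"
        proof (intro allI impI)
          fix l assume l: "l \<le> m0"
          have lm: "l \<le> m" using l by (simp add: m_def)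
          have "w l ^ M = exp (L l / of_nat M) ^ M" using lm by (simp add: w_def)
          also have "\<dots> = exp (of_nat M * (L l / of_nat M))" by (rule exp_of_nat_mult[symmetric])
          also have "\<dots> = z l" using M0 znz by (simp add: L_def)
          finally have wM: "w l ^ M = z l" .
          have yl: "y l = z l * x l" using TN_nz[OF xTN] by (simp add: z_def)
          have "b l ^ M * x l - y l = (b l ^ M - w l ^ M) * x l" by (simp add: yl wM algebra_simps)
          then have "cmod (xs (Suc k) l - y l) = cmod (b l ^ M - w l ^ M)"
            using xTN by (simp add: xsk norm_mult TN_unit)
          also have "\<dots> \<le> real M * cmod (b l - w l)" by (rule pow_diff[OF bu wu])
          also have "\<dots> < e1" by (rule bwS[OF lm])
          finally show "cmod (xs (Suc k) l - y l) < \<delta>0" using e1(2) by linarith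
        qed
        then show ?thesis using m0(2) xsTN by blast
      qed
      have "xs (Suc k) \<in> local_orbit tmult x U V"
        unfolding local_orbit_def
        using xsU gsV xs0 step by (intro CollectI conjI exI[of _ k] exI[of _ gs] exI[of _ xs]) auto
      then show "\<exists>q. q \<in> local_orbit tmult x U V \<and> q \<in> N" using final by blast
    qed
    then show "y \<in> TN_top closure_of (local_orbit tmult x U V)" using yTN by (simp add: in_closure_of)
  qed
  then have "T \<subseteq> TN_top interior_of (TN_top closure_of (local_orbit tmult x U V))"
    using oT interior_of_maximal by blast
  then show ?thesis using xT by blast
qed

end

theorem mainTheorem1:
  fixes G :: "(nat \<Rightarrow> complex) set" and \<tau> :: "(nat \<Rightarrow> complex) topology"
  assumes "polishable G"
    and "G \<noteq> TN"
    and "strongly_dense G"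
    and "polish_group_topology_for G \<tau>"
  shows "turbulent \<tau> tone tinv TN_top tmult"
proof -
  have sub: "subgroup_TN G" using assms(1) by (simp add: polishable_def)
  interpret setting2 G \<tau> using sub assms(4,3) by unfold_locales
  show ?thesis unfolding turbulent_def
    using orbit_dense orbit_meager[OF assms(2)] local_orbit_int by auto
qed


end
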